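(* Let $f:[0,f_0)\to[0,\infty)$ ($f_0>0$) be increasing, convex, of class $C^1$, with $f(0)=f'(0)=0$; let $K\subset\mathbb R^d$ be closed and convex with $B_r(0)\subset K\subset B_R(0)$, $0<r\le R$; and let $\varphi(x)=f(M_K(x))$. Then $\varphi$ satisfies property (X) with $D=R/r$; i.e., for every $C>0$, every $\zeta_0\in\mathcal D_C(\varphi)$, every $\alpha\in L^\infty_{loc}(0,\infty)$ with $\alpha(t)\ge\alpha_0>0$ a.e., and every $g\in L^\infty(0,\infty)^d$ with $|g(t)|\le C$ a.e., the solution $\zeta\in W^{1,1}_{loc}(0,\infty)^d$ of $\alpha(t)\zeta_t+\partial\varphi(\zeta)\ni g(t)$ a.e., $\zeta(0)=\zeta_0$, satisfies $|g(t)-\alpha(t)\zeta_t(t)|\le (R/r)C$ (and hence $|\alpha(t)\zeta_t(t)|\le(R/r+1)C$) a.e.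
   Context: $M_K(x)=\inf\{s>0:x/s\in K\}$ is the Minkowski functional of $K$; $\varphi=+\infty$ where $M_K(x)\notin[0,f_0)$. For a proper convex lsc $\varphi$ and $C>0$, $\mathcal D_C(\varphi)=\{\chi\in\mathrm{dom}\,\varphi:\exists\xi\in\partial\varphi(\chi),|\xi|\le C\}$. Property (X) with constant $D$: for every $C>0$, $\zeta_0\in\mathcal D_C(\varphi)$, $\alpha\in L^\infty_{loc}(0,\infty)$ with $\alpha\ge\alpha_0>0$ a.e., and $g\in L^\infty(0,\infty)^d$ with $|g|\le C$ a.e., the solution of $\alpha\zeta_t+\partial\varphi(\zeta)\ni g$, $\zeta(0)=\zeta_0$, satisfies $|g-\alpha\zeta_t|\le DC$ a.e. *)

theory Defs
  imports "HOL-Analysis.Analysis"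
begin

definition minkowski :: "'a::euclidean_space set \<Rightarrow> 'a \<Rightarrow> real" where
  "minkowski K x = Inf {s. s > 0 \<and> scaleR (1 / s) x \<in> K}"

text \<open>phi(x) = f(M_K(x)) if M_K(x) \<in> [0,f0), +\<infinity> otherwise (f0 may be +\<infinity>).\<close>
definition phi_of :: "(real \<Rightarrow> real) \<Rightarrow> ereal \<Rightarrow> 'a::euclidean_space set \<Rightarrow> 'a \<Rightarrow> ereal" where
  "phi_of f f0 K x =
     (if 0 \<le> minkowski K x \<and> ereal (minkowski K x) < f0 then ereal (f (minkowski K x)) else \<infinity>)"

definition edom :: "('a \<Rightarrow> ereal) \<Rightarrow> 'a set" where
  "edom \<phi> = {x. \<phi> x < \<infinity>}"

definition subdiff :: "('a::euclidean_space \<Rightarrow> ereal) \<Rightarrow> 'a \<Rightarrow> 'a set" where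
  "subdiff \<phi> x = {\<xi>. \<bar>\<phi> x\<bar> \<noteq> \<infinity> \<and> (\<forall>y. \<phi> x + ereal (\<xi> \<bullet> (y - x)) \<le> \<phi> y)}"

definition DC :: "real \<Rightarrow> ('a::euclidean_space \<Rightarrow> ereal) \<Rightarrow> 'a set" where
  "DC C \<phi> = {z. z \<in> edom \<phi> \<and> (\<exists>\<xi> \<in> subdiff \<phi> z. norm \<xi> \<le> C)}"

text \<open>zeta is a solution in W^{1,1}_loc(0,\<infinity>)^d with (weak) derivative zeta' of
  alpha zeta_t + \<partial>phi(zeta) \<ni> g a.e., zeta(0) = zeta0.\<close>
definition is_solution ::
  "('a::euclidean_space \<Rightarrow> ereal) \<Rightarrow> (real \<Rightarrow> real) \<Rightarrow> (real \<Rightarrow> 'a) \<Rightarrow> 'a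
     \<Rightarrow> (real \<Rightarrow> 'a) \<Rightarrow> (real \<Rightarrow> 'a) \<Rightarrow> bool" where
  "is_solution \<phi> \<alpha> g \<zeta>0 \<zeta> \<zeta>' \<longleftrightarrow>
     (\<forall>T>0. \<zeta>' absolutely_integrable_on {0..T}) \<and>
     (\<forall>t\<ge>0. \<zeta> t = \<zeta>0 + integral {0..t} \<zeta>') \<and>
     (AE t in lebesgue. t > 0 \<longrightarrow> g t - \<alpha> t *\<^sub>R \<zeta>' t \<in> subdiff \<phi> (\<zeta> t))"

definition property_X :: "('a::euclidean_space \<Rightarrow> ereal) \<Rightarrow> real \<Rightarrow> bool" where
  "property_X \<phi> D \<longleftrightarrow>
    (\<forall>C>0. \<forall>\<zeta>0 \<in> DC C \<phi>. \<forall>\<alpha> :: real \<Rightarrow> real. \<forall>g :: real \<Rightarrow> 'a.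
       set_borel_measurable lebesgue {0<..} \<alpha> \<longrightarrow>
       (\<forall>T>0. \<exists>B. AE t in lebesgue. t \<in> {0<..<T} \<longrightarrow> \<bar>\<alpha> t\<bar> \<le> B) \<longrightarrow>
       (\<exists>\<alpha>0>0. AE t in lebesgue. t > 0 \<longrightarrow> \<alpha>0 \<le> \<alpha> t) \<longrightarrow>
       set_borel_measurable lebesgue {0<..} g \<longrightarrow>
       (AE t in lebesgue. t > 0 \<longrightarrow> norm (g t) \<le> C) \<longrightarrow>
       (\<forall>\<zeta> \<zeta>'. is_solution \<phi> \<alpha> g \<zeta>0 \<zeta> \<zeta>' \<longrightarrow>
          (AE t in lebesgue. t > 0 \<longrightarrow> norm (g t - \<alpha> t *\<^sub>R \<zeta>' t) \<le> D * C)))"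

end

theory Submission
  imports Defs
begin


context
  fixes K :: "'a::euclidean_space set" and r R :: real
  assumes Kc: "convex K" and rp: "0 < r" and ib: "ball 0 r \<subseteq> K" and ob: "K \<subseteq> cball 0 R"
begin

lemma Rpos: "0 < R"
proof -
  obtain b :: 'a where b: "b \<in> Basis" using nonempty_Basis by blast
  have nb: "norm b = 1" using b by simp
  have "(r/2) *\<^sub>R b \<in> ball 0 r" using rp nb by simp
  hence "(r/2) *\<^sub>R b \<in> cball 0 R" using ib ob subsetD by metis
  hence "norm ((r/2) *\<^sub>R b) \<le> R" by simp
  moreover have "norm ((r/2) *\<^sub>R b) = r/2" using rp nb by simp
  ultimately have "r/2 \<le> R" by simp
  thus ?thesis using rp by linarith
qed

lemma mem_big: "s > norm x / r \<Longrightarrow> s > 0 \<and> (1/s) *\<^sub>R x \<in> K"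
proof -
  assume s: "s > norm x / r"
  have s0: "s > 0" using s rp by (smt (verit) divide_nonneg_pos norm_ge_zero)
  have "norm x < s * r" using s rp by (simp add: pos_divide_less_eq mult.commute)
  hence "norm ((1/s) *\<^sub>R x) < r" using s0 by (simp add: divide_simps mult.commute)
  thus ?thesis using ib s0 by auto
qed

lemma mem_norm: "s > 0 \<Longrightarrow> (1/s) *\<^sub>R x \<in> K \<Longrightarrow> norm x \<le> s * R"
proof -
  assume s0: "s > 0" and m: "(1/s) *\<^sub>R x \<in> K"
  hence "norm ((1/s) *\<^sub>R x) \<le> R" using ob by auto
  thus ?thesis using s0 by (simp add: divide_simps mult.commute)
qed

lemma mem_scale: "s > 0 \<Longrightarrow> (1/s) *\<^sub>R x \<in> K \<Longrightarrow> s \<le> t \<Longrightarrow> (1/t) *\<^sub>R x \<in> K"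
proof -
  assume s0: "s > 0" and m: "(1/s) *\<^sub>R x \<in> K" and st: "s \<le> t"
  have "0 \<in> K" using ib rp by auto
  have "(s/t) *\<^sub>R ((1/s) *\<^sub>R x) + (1 - s/t) *\<^sub>R 0 \<in> K"
    using Kc m \<open>0 \<in> K\<close> s0 st by (intro convexD) (auto simp: divide_simps)
  thus ?thesis using s0 st by simp
qed

lemma M_ne: "{s. s > 0 \<and> (1/s) *\<^sub>R x \<in> K} \<noteq> {}"
proof -
  have "norm x / r < norm x / r + 1" by simp
  from mem_big[OF this] show ?thesis by blast
qed

lemma M_nonneg: "0 \<le> minkowski K x"
  unfolding minkowski_def
  by (rule cInf_greatest[OF M_ne]) (use  in auto)

lemma M_bdd: "bdd_below {s. s > 0 \<and> (1/s) *\<^sub>R x \<in> K}"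
  by (rule bdd_belowI[of _ 0]) auto

lemma M_le: "s > 0 \<Longrightarrow> (1/s) *\<^sub>R x \<in> K \<Longrightarrow> minkowski K x \<le> s"
  unfolding minkowski_def by (rule cInf_lower) (auto intro: M_bdd)

lemma M_upper: "minkowski K x \<le> norm x / r"
proof (rule field_le_epsilon)
  fix e :: real assume "e > 0"
  thus "minkowski K x \<le> norm x / r + e" using mem_big[where s="norm x / r + e" and x=x] M_le by auto
qed

lemma M_lower: "norm x \<le> R * minkowski K x"
proof -
  have "norm x / R \<le> minkowski K x"
    unfolding minkowski_def
    by (rule cInf_greatest[OF M_ne]) (use  mem_norm Rpos in \<open>auto simp: divide_simps mult.commute\<close>)
  thus ?thesis using Rpos by (simp add: divide_simps mult.commute)
qed

lemma M_zero: "minkowski K 0 = 0"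
  using M_upper[of 0] M_nonneg[of 0] by simp

lemma M_add: "minkowski K (a + b) \<le> minkowski K a + minkowski K b"
proof -
  have key: "minkowski K (a+b) \<le> s + t" if s: "s > 0" "(1/s) *\<^sub>R a \<in> K" and t: "t > 0" "(1/t) *\<^sub>R b \<in> K" for s t
  proof -
    have "(s/(s+t)) *\<^sub>R ((1/s) *\<^sub>R a) + (1 - s/(s+t)) *\<^sub>R ((1/t) *\<^sub>R b) \<in> K"
      using Kc s t by (intro convexD) (auto simp: divide_simps)
    moreover have "(s/(s+t)) *\<^sub>R ((1/s) *\<^sub>R a) + (1 - s/(s+t)) *\<^sub>R ((1/t) *\<^sub>R b) = (1/(s+t)) *\<^sub>R (a + b)"
      using s t by (simp add: divide_simps scaleR_add_right)
    ultimately show ?thesis using M_le[where s="s+t" and x="a+b"] s t by simp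
  qed
  have "minkowski K (a+b) - t \<le> minkowski K a" if t: "t > 0" "(1/t) *\<^sub>R b \<in> K" for t
  proof -
    have "minkowski K (a+b) - t \<le> s" if "s \<in> {s. s > 0 \<and> (1/s) *\<^sub>R a \<in> K}" for s
      using key[of s t] that t by simp
    hence "minkowski K (a+b) - t \<le> Inf {s. s > 0 \<and> (1/s) *\<^sub>R a \<in> K}"
      by (intro cInf_greatest[OF M_ne]) 
    thus ?thesis by (simp add: minkowski_def)
  qed
  hence "minkowski K (a+b) - minkowski K a \<le> Inf {s. s > 0 \<and> (1/s) *\<^sub>R b \<in> K}"
    by (intro cInf_greatest[OF M_ne]) (smt (verit) mem_Collect_eq)
  thus ?thesis by (simp add: minkowski_def)
qed

lemma M_scale: "c \<ge> 0 \<Longrightarrow> minkowski K (c *\<^sub>R x) \<le> c * minkowski K x"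
proof -
  assume c: "c \<ge> 0"
  show ?thesis
  proof (cases "c = 0")
    case True thus ?thesis using M_zero by simp
  next
    case False
    hence cp: "c > 0" using c by simp
    have "minkowski K (c *\<^sub>R x) / c \<le> s" if s: "s > 0" "(1/s) *\<^sub>R x \<in> K" for s
    proof -
      have "(1 / (c * s)) *\<^sub>R (c *\<^sub>R x) = (1/s) *\<^sub>R x" using cp s by simp
      hence "(1 / (c * s)) *\<^sub>R (c *\<^sub>R x) \<in> K" using s by metis
      from M_le[OF _ this] have "minkowski K (c *\<^sub>R x) \<le> c * s" using cp s by simp
      thus ?thesis using cp by (simp add: divide_simps mult.commute)
    qed
    hence "minkowski K (c *\<^sub>R x) / c \<le> minkowski K x"
      unfolding minkowski_def[of K x]
      by (intro cInf_greatest[OF M_ne]) (use  in auto)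
    thus ?thesis using cp by (simp add: divide_simps mult.commute)
  qed
qed

lemma M_convex: "0 \<le> s \<Longrightarrow> s \<le> 1 \<Longrightarrow>
   minkowski K ((1-s) *\<^sub>R a + s *\<^sub>R b) \<le> (1-s) * minkowski K a + s * minkowski K b"
  using M_add[of "(1-s) *\<^sub>R a" "s *\<^sub>R b"] M_scale[of "1-s" a] M_scale[of s b] by linarith

lemma M_lip: "\<bar>minkowski K a - minkowski K b\<bar> \<le> norm (a - b) / r"
proof -
  have "minkowski K a \<le> minkowski K b + norm (a - b) / r"
    using M_add[of b "a - b"] M_upper[of "a-b"] by simp
  moreover have "minkowski K b \<le> minkowski K a + norm (a - b) / r"
    using M_add[of a "b - a"] M_upper[of "b-a"] by (simp add: norm_minus_commute)
  ultimately show ?thesis by linarith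
qed

lemma M_cont: "continuous_on UNIV (minkowski K)"
  unfolding continuous_on_iff
proof (intro ballI allI impI)
  fix x e assume "(e::real) > 0"
  show "\<exists>d>0. \<forall>x'\<in>UNIV. dist x' x < d \<longrightarrow> dist (minkowski K x') (minkowski K x) < e"
  proof (intro exI[of _ "e*r"] conjI ballI impI)
    show "e*r > 0" using \<open>e>0\<close> rp by simp
    fix y assume "dist y x < e * r"
    hence "norm (y - x) / r < e" using rp by (simp add: dist_norm divide_simps mult.commute)
    thus "dist (minkowski K y) (minkowski K x) < e" using M_lip[of y x] by (simp add: dist_real_def)
  qed
qed

end


lemma D_down: "0 \<le> x \<Longrightarrow> x \<le> y \<Longrightarrow> ereal y < f0 \<Longrightarrow> ereal x < f0"
  by (meson ereal_less_eq(3) order_le_less_trans)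

lemma D_conv: "0 \<le> s \<Longrightarrow> s \<le> 1 \<Longrightarrow> ereal a < f0 \<Longrightarrow> ereal b < f0 \<Longrightarrow> ereal ((1-s)*a + s*b) < f0"
proof -
  assume s: "0 \<le> s" "s \<le> 1" and a: "ereal a < f0" and b: "ereal b < f0"
  have "(1-s)*a + s*b \<le> max a b"
  proof -
    have "(1-s)*a \<le> (1-s)* max a b" using s by (intro mult_left_mono) auto
    moreover have "s*b \<le> s* max a b" using s by (intro mult_left_mono) auto
    ultimately show ?thesis by (simp add: algebra_simps)
  qed
  moreover have "ereal (max a b) < f0" using a b by (simp add: max_def)
  ultimately show ?thesis by (meson ereal_less_eq(3) order_le_less_trans)
qed

lemma D_right: "ereal x < f0 \<Longrightarrow> \<exists>e>0. ereal (x + e) < f0"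
proof (cases f0)
  case (real F)
  assume "ereal x < f0"
  hence "x < F" using real by simp
  thus ?thesis using real by (intro exI[of _ "(F - x)/2"]) (auto simp: field_simps)
next
  case PInf thus ?thesis by (intro exI[of _ 1]) auto
next
  case MInf assume "ereal x < f0" thus ?thesis using MInf by simp
qed

context
  fixes f f' :: "real \<Rightarrow> real" and f0 :: ereal
  assumes f0p: "f0 > 0"
    and fm: "mono_on {x. 0 \<le> x \<and> ereal x < f0} f"
    and fc: "convex_on {x. 0 \<le> x \<and> ereal x < f0} f"
    and fd: "\<forall>x. 0 \<le> x \<and> ereal x < f0 \<longrightarrow>
                   (f has_real_derivative f' x) (at x within {x. 0 \<le> x \<and> ereal x < f0})"
    and fcont: "continuous_on {x. 0 \<le> x \<and> ereal x < f0} f'"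
    and f'0: "f' 0 = 0"
begin

lemma quot_lim:
  assumes m: "0 \<le> m" "ereal m < f0" and me: "0 \<le> m + e" "ereal (m+e) < f0" and e: "e \<noteq> 0"
  shows "((\<lambda>s. (f (m + s*e) - f m) / s) \<longlongrightarrow> e * f' m) (at_right 0)"
proof -
  let ?D = "{x. 0 \<le> x \<and> ereal x < f0}"
  have "((\<lambda>y. (f y - f m) / (y - m)) \<longlongrightarrow> f' m) (at m within ?D)"
    using fd m by (simp add: has_field_derivative_iff)
  moreover have "filterlim (\<lambda>s. m + s*e) (at m within ?D) (at_right 0)"
    unfolding filterlim_at
  proof
    have "eventually (\<lambda>s. s \<in> {0<..<1}) (at_right (0::real))"
      by (rule eventually_at_right_real) simp
    thus "\<forall>\<^sub>F x in at_right 0. m + x * e \<in> ?D \<and> m + x * e \<noteq> m"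
    proof (rule eventually_mono)
      fix s :: real assume s: "s \<in> {0<..<1}"
      have "m + s*e = (1-s)*m + s*(m+e)" by (simp add: algebra_simps)
      moreover have "0 \<le> (1-s)*m + s*(m+e)" using s m me by auto
      moreover have "ereal ((1-s)*m + s*(m+e)) < f0" using s m me by (intro D_conv) auto
      ultimately show "m + s * e \<in> ?D \<and> m + s * e \<noteq> m" using s e by auto
    qed
    show "((\<lambda>s. m + s * e) \<longlongrightarrow> m) (at_right 0)"
      by (auto intro!: tendsto_eq_intros)
  qed
  ultimately have "((\<lambda>s. (f (m + s*e) - f m) / (m + s*e - m)) \<longlongrightarrow> f' m) (at_right 0)"
    by (rule filterlim_compose[of _ _ "at m within ?D"])
  hence "((\<lambda>s. e * ((f (m + s*e) - f m) / (m + s*e - m))) \<longlongrightarrow> e * f' m) (at_right 0)"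
    by (rule tendsto_mult_left)
  moreover have "eventually (\<lambda>s. e * ((f (m + s*e) - f m) / (m + s*e - m)) = (f (m + s*e) - f m) / s) (at_right (0::real))"
    by (rule eventually_mono[OF eventually_at_right_real[of 0 "1::real"]]) (use e in auto)
  ultimately show ?thesis by (rule Lim_transform_eventually)
qed

lemma quot_lower:
  assumes m: "0 \<le> m" "ereal m < f0" and me: "0 \<le> m + e" "ereal (m+e) < f0"
    and le: "\<And>s. 0 < s \<Longrightarrow> s < 1 \<Longrightarrow> s * a \<le> f (m + s*e) - f m"
  shows "a \<le> e * f' m"
proof (cases "e = 0")
  case True
  have "(1/2) * a \<le> 0" using le[of "1/2"] True by simp
  thus ?thesis using True by simp
next
  case False
  have "eventually (\<lambda>s. a \<le> (f (m + s*e) - f m) / s) (at_right (0::real))"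
    by (rule eventually_mono[OF eventually_at_right_real[of 0 "1::real"]]) (use le in \<open>auto simp: divide_simps mult.commute\<close>)
  from tendsto_lowerbound[OF quot_lim[OF m me False] this] show ?thesis by simp
qed

lemma quot_upper:
  assumes m: "0 \<le> m" "ereal m < f0" and me: "0 \<le> m + e" "ereal (m+e) < f0"
    and le: "\<And>s. 0 < s \<Longrightarrow> s < 1 \<Longrightarrow> f (m + s*e) - f m \<le> s * a"
  shows "e * f' m \<le> a"
proof (cases "e = 0")
  case True
  have "0 \<le> (1/2) * a" using le[of "1/2"] True by simp
  thus ?thesis using True by simp
next
  case False
  have "eventually (\<lambda>s. (f (m + s*e) - f m) / s \<le> a) (at_right (0::real))"
    by (rule eventually_mono[OF eventually_at_right_real[of 0 "1::real"]]) (use le in \<open>auto simp: divide_simps mult.commute\<close>)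
  from tendsto_upperbound[OF quot_lim[OF m me False] this] show ?thesis by simp
qed

lemma chord_bound:
  assumes a: "0 \<le> a" "ereal a < f0" and b: "0 \<le> b" "ereal b < f0"
  shows "(b - a) * f' a \<le> f b - f a"
proof (rule quot_upper)
  show "0 \<le> a + (b - a)" "ereal (a + (b-a)) < f0" using b by auto
  fix s :: real assume s: "0 < s" "s < 1"
  have "f ((1 - s) *\<^sub>R a + s *\<^sub>R b) \<le> (1 - s) * f a + s * f b"
    using s a b by (intro convex_onD[OF fc]) auto
  moreover have "(1 - s) *\<^sub>R a + s *\<^sub>R b = a + s * (b - a)" by (simp add: algebra_simps)
  ultimately show "f (a + s * (b - a)) - f a \<le> s * (f b - f a)" by (simp add: algebra_simps)
qed (use a in auto)

lemma f'_mono: "0 \<le> a \<Longrightarrow> a \<le> b \<Longrightarrow> ereal b < f0 \<Longrightarrow> f' a \<le> f' b"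
proof -
  assume ab: "0 \<le> a" "a \<le> b" "ereal b < f0"
  have ea: "ereal a < f0" using ab D_down by blast
  show ?thesis
  proof (cases "a = b")
    case False
    have "(b - a) * f' a \<le> f b - f a" using chord_bound ab ea by auto
    moreover have "(a - b) * f' b \<le> f a - f b" using chord_bound ab ea by auto
    ultimately have "(b - a) * f' a \<le> (b - a) * f' b" by (simp add: algebra_simps)
    thus ?thesis using False ab by simp
  qed simp
qed

lemma f'_nonneg: "0 \<le> a \<Longrightarrow> ereal a < f0 \<Longrightarrow> 0 \<le> f' a"
  using f'_mono[of 0 a] f'0 by simp

end


lemma norm_add_sq: "(norm (a + b :: 'a::real_inner))^2 = (norm a)^2 + 2 * (a \<bullet> b) + (norm b)^2"
  by (simp add: power2_norm_eq_inner inner_add inner_commute algebra_simps)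



lemma induct_bound:
  fixes h G :: "real \<Rightarrow> real"
  assumes d: "\<delta> > 0" and h0: "h 0 \<le> e * G 0"
    and step: "\<And>s u. 0 \<le> s \<Longrightarrow> s \<le> u \<Longrightarrow> u \<le> T \<Longrightarrow> u - s \<le> \<delta> \<Longrightarrow> h s \<le> e * G s \<Longrightarrow> h u \<le> e * G u"
    and u: "0 \<le> u" "u \<le> T"
  shows "h u \<le> e * G u"
proof -
  have ind: "\<And>v. 0 \<le> v \<Longrightarrow> v \<le> T \<Longrightarrow> v \<le> real k * \<delta> \<Longrightarrow> h v \<le> e * G v" for k
  proof (induction k)
    case 0
    hence "v = 0" by simp
    thus ?case using h0 by simp
  next
    case (Suc k)
    show ?case
    proof (cases "v \<le> real k * \<delta>")
      case True thus ?thesis using Suc.IH Suc.prems(1,2) by blast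
    next
      case False
      define s where "s = real k * \<delta>"
      have s1: "0 \<le> s" using d by (simp add: s_def)
      have s2: "s \<le> v" using False by (simp add: s_def)
      have "real (Suc k) * \<delta> = s + \<delta>" by (simp add: s_def distrib_right)
      hence s3: "v - s \<le> \<delta>" using Suc.prems(3) by linarith
      have "s \<le> T" using s2 Suc.prems(2) by linarith
      hence hs: "h s \<le> e * G s" using Suc.IH[OF s1] by (simp add: s_def)
      show ?thesis by (rule step[OF s1 s2 Suc.prems(2) s3 hs])
    qed
  qed
  obtain k :: nat where "u / \<delta> \<le> real k" using real_nat_ceiling_ge by blast
  hence "u \<le> real k * \<delta>" using d by (simp add: divide_simps)
  thus ?thesis using ind u by blast
qed


lemma dyn:
  fixes \<zeta> \<zeta>' :: "real \<Rightarrow> 'a::euclidean_space" and S :: "'a set"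
  assumes Scl: "closed S" and Scv: "convex S" and Sne: "S \<noteq> {}"
    and int: "\<forall>T>0. \<zeta>' absolutely_integrable_on {0..T}"
    and sol: "\<forall>t\<ge>0. \<zeta> t = z0 + integral {0..t} \<zeta>'"
    and z0: "z0 \<in> S"
    and ae: "AE \<tau> in lebesgue. \<tau> > 0 \<longrightarrow> (\<zeta> \<tau> - closest_point S (\<zeta> \<tau>)) \<bullet> \<zeta>' \<tau> \<le> 0"
    and t0: "0 \<le> t"
  shows "\<zeta> t \<in> S"
proof -
  define P where "P = closest_point S"
  define w where "w \<tau> = \<zeta> \<tau> - P (\<zeta> \<tau>)" for \<tau>
  define h where "h \<tau> = (norm (w \<tau>))^2" for \<tau>
  define G where "G \<tau> = integral {0..\<tau>} (\<lambda>\<sigma>. norm (\<zeta>' \<sigma>))" for \<tau>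
  define T where "T = t + 1"
  have T: "T > 0" using t0 by (simp add: T_def)
  have i1: "\<zeta>' integrable_on {0..T}" and i2: "(\<lambda>\<sigma>. norm (\<zeta>' \<sigma>)) integrable_on {0..T}"
    using int T absolutely_integrable_on_def by blast+
  have isub: "\<zeta>' integrable_on {s..u}" if "0 \<le> s" "u \<le> T" for s u
    using integrable_subinterval_real[OF i1] that by auto
  have isub2: "(\<lambda>\<sigma>. norm (\<zeta>' \<sigma>)) integrable_on {s..u}" if "0 \<le> s" "u \<le> T" for s u
    using integrable_subinterval_real[OF i2] that by auto
  have zdiff: "\<zeta> u - \<zeta> s = integral {s..u} \<zeta>'" if "0 \<le> s" "s \<le> u" "u \<le> T" for s u
  proof -
    have "integral {0..s} \<zeta>' + integral {s..u} \<zeta>' = integral {0..u} \<zeta>'"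
      using that by (intro Henstock_Kurzweil_Integration.integral_combine isub) auto
    thus ?thesis using sol that by (auto simp: algebra_simps)
  qed
  have Gdiff: "G u - G s = integral {s..u} (\<lambda>\<sigma>. norm (\<zeta>' \<sigma>))" if "0 \<le> s" "s \<le> u" "u \<le> T" for s u
  proof -
    have "integral {0..s} (\<lambda>\<sigma>. norm (\<zeta>' \<sigma>)) + integral {s..u} (\<lambda>\<sigma>. norm (\<zeta>' \<sigma>)) = integral {0..u} (\<lambda>\<sigma>. norm (\<zeta>' \<sigma>))"
      using that by (intro Henstock_Kurzweil_Integration.integral_combine isub2) auto
    thus ?thesis by (simp add: G_def algebra_simps)
  qed
  have PS: "P a \<in> S" for a unfolding P_def using closest_point_in_set[OF Scl Sne] .
  have Plip: "dist (P a) (P b) \<le> dist a b" for a b unfolding P_def by (rule closest_point_lipschitz[OF Scv Scl Sne])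
  have wlip: "norm (w a - w b) \<le> 2 * norm (\<zeta> a - \<zeta> b)" for a b
  proof -
    have "w a - w b = (\<zeta> a - \<zeta> b) - (P (\<zeta> a) - P (\<zeta> b))" by (simp add: w_def algebra_simps)
    hence "norm (w a - w b) \<le> norm (\<zeta> a - \<zeta> b) + norm (P (\<zeta> a) - P (\<zeta> b))"
      by (metis norm_triangle_ineq4)
    also have "norm (P (\<zeta> a) - P (\<zeta> b)) \<le> norm (\<zeta> a - \<zeta> b)" using Plip by (simp add: dist_norm)
    finally show ?thesis by simp
  qed
  have hstep: "h u \<le> h s + 2 * (w s \<bullet> (\<zeta> u - \<zeta> s)) + (norm (\<zeta> u - \<zeta> s))^2" for s u
  proof -
    have "dist (\<zeta> u) (P (\<zeta> u)) \<le> dist (\<zeta> u) (P (\<zeta> s))"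
      unfolding P_def by (rule closest_point_le[OF Scl PS[unfolded P_def]])
    hence "norm (w u) \<le> norm (w s + (\<zeta> u - \<zeta> s))" by (simp add: w_def dist_norm algebra_simps)
    hence "h u \<le> (norm (w s + (\<zeta> u - \<zeta> s)))^2" unfolding h_def by (intro power_mono) auto
    thus ?thesis unfolding norm_add_sq h_def by simp
  qed
  obtain N where N: "negligible N" "{\<tau>. \<not> (\<tau> > 0 \<longrightarrow> w \<tau> \<bullet> \<zeta>' \<tau> \<le> 0)} \<subseteq> N"
    using ae unfolding eventually_ae_filter_negligible w_def P_def by blast
  have aebound: "w s \<bullet> (\<zeta> u - \<zeta> s) \<le> 2 * \<eta> * (G u - G s)"
    if su: "0 \<le> s" "s \<le> u" "u \<le> T" and eta: "\<forall>\<tau>\<in>{s..u}. norm (\<zeta> \<tau> - \<zeta> s) \<le> \<eta>" for s u \<eta>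
  proof -
    define N' where "N' = insert 0 N"
    have nN': "negligible N'" using N by (simp add: N'_def)
    define g where "g \<tau> = (if \<tau> \<in> N' then 2 * \<eta> * norm (\<zeta>' \<tau>) else w s \<bullet> \<zeta>' \<tau>)" for \<tau>
    have il: "(\<lambda>\<tau>. w s \<bullet> \<zeta>' \<tau>) integrable_on {s..u}"
      using integrable_linear[OF isub[OF su(1) su(3)] bounded_linear_inner_right[of "w s"]] by (simp add: o_def)
    have el: "integral {s..u} (\<lambda>\<tau>. w s \<bullet> \<zeta>' \<tau>) = w s \<bullet> integral {s..u} \<zeta>'"
      using integral_linear[OF isub[OF su(1) su(3)] bounded_linear_inner_right[of "w s"]] by (simp add: o_def)
    have e2: "integral {s..u} (\<lambda>\<tau>. w s \<bullet> \<zeta>' \<tau>) = integral {s..u} g"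
      by (rule integral_spike[OF nN']) (auto simp: g_def)
    have ig: "g integrable_on {s..u}"
      by (rule integrable_spike[OF il nN']) (auto simp: g_def)
    have ib: "(\<lambda>\<tau>. 2 * \<eta> * norm (\<zeta>' \<tau>)) integrable_on {s..u}"
      by (rule integrable_on_mult_right[OF isub2[OF su(1) su(3)]])
    have "integral {s..u} g \<le> integral {s..u} (\<lambda>\<tau>. 2 * \<eta> * norm (\<zeta>' \<tau>))"
    proof (rule integral_le[OF ig ib])
      fix \<tau> assume tau: "\<tau> \<in> {s..u}"
      show "g \<tau> \<le> 2 * \<eta> * norm (\<zeta>' \<tau>)"
      proof (cases "\<tau> \<in> N'")
        case True thus ?thesis by (simp add: g_def)
      next
        case False
        hence "\<tau> \<noteq> 0" "\<tau> \<notin> N" by (auto simp: N'_def)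
        hence "\<tau> > 0" using tau su by auto
        hence neg: "w \<tau> \<bullet> \<zeta>' \<tau> \<le> 0" using N(2) \<open>\<tau> \<notin> N\<close> by auto
        have "w s \<bullet> \<zeta>' \<tau> = w \<tau> \<bullet> \<zeta>' \<tau> + (w s - w \<tau>) \<bullet> \<zeta>' \<tau>" by (simp add: inner_diff_left)
        also have "(w s - w \<tau>) \<bullet> \<zeta>' \<tau> \<le> norm (w s - w \<tau>) * norm (\<zeta>' \<tau>)" by (rule norm_cauchy_schwarz)
        also have "norm (w s - w \<tau>) \<le> 2 * \<eta>"
        proof -
          have "norm (\<zeta> \<tau> - \<zeta> s) \<le> \<eta>" using eta tau by blast
          thus ?thesis using wlip[of s \<tau>] by (simp add: norm_minus_commute)
        qed
        hence "norm (w s - w \<tau>) * norm (\<zeta>' \<tau>) \<le> 2 * \<eta> * norm (\<zeta>' \<tau>)" by (intro mult_right_mono) auto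
        finally show ?thesis using neg False by (simp add: g_def)
      qed
    qed
    also have "\<dots> = 2 * \<eta> * (G u - G s)" using Gdiff[OF su] by simp
    finally show ?thesis using el e2 zdiff[OF su] by simp
  qed
  have cont: "continuous_on {0..T} \<zeta>"
  proof -
    have "continuous_on {0..T} (\<lambda>x. z0 + integral {0..x} \<zeta>')"
      by (intro continuous_intros indefinite_integral_continuous_1 i1)
    thus ?thesis by (rule continuous_on_eq) (use sol in auto)
  qed
  have uc: "uniformly_continuous_on {0..T} \<zeta>"
    by (rule compact_uniformly_continuous[OF cont compact_Icc])
  have h0: "h 0 = 0"
  proof -
    have "\<zeta> 0 = z0" using sol by auto
    hence "w 0 = 0" using z0 by (simp add: w_def P_def closest_point_self)
    thus ?thesis by (simp add: h_def)
  qed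
  have G0: "G 0 = 0" by (simp add: G_def)
  have Gnn: "0 \<le> G u - G s" if "0 \<le> s" "s \<le> u" "u \<le> T" for s u
    using Gdiff[OF that] by (simp add: integral_nonneg isub2 that)
  have main: "h t \<le> \<epsilon> * G t" if ep: "\<epsilon> > 0" for \<epsilon>
  proof -
    have "\<epsilon>/5 > 0" using ep by simp
    from uc[unfolded uniformly_continuous_on_def, rule_format, OF this]
    obtain \<delta> where d: "\<delta> > 0" "\<forall>x\<in>{0..T}. \<forall>x'\<in>{0..T}. dist x' x < \<delta> \<longrightarrow> dist (\<zeta> x') (\<zeta> x) < \<epsilon>/5"
      by blast
    have step: "h u \<le> \<epsilon> * G u"
      if su1: "0 \<le> s" and su2: "s \<le> u" and su3: "u \<le> T" and us: "u - s \<le> \<delta>/2" and hs: "h s \<le> \<epsilon> * G s" for s u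
    proof -
      note su = su1 su2 su3
      have eta: "\<forall>\<tau>\<in>{s..u}. norm (\<zeta> \<tau> - \<zeta> s) \<le> \<epsilon>/5"
      proof
        fix \<tau> assume tau: "\<tau> \<in> {s..u}"
        have "\<tau> - s \<ge> 0" "\<tau> - s < \<delta>" using tau us d(1) by auto
        hence "dist \<tau> s < \<delta>" by (simp add: dist_real_def)
        moreover have "\<tau> \<in> {0..T}" "s \<in> {0..T}" using tau su1 su2 su3 by auto
        ultimately have "dist (\<zeta> \<tau>) (\<zeta> s) < \<epsilon>/5" using d(2) by blast
        thus "norm (\<zeta> \<tau> - \<zeta> s) \<le> \<epsilon>/5" by (simp add: dist_norm)
      qed
      have "u \<in> {s..u}" using su2 by simp
      hence n1: "norm (\<zeta> u - \<zeta> s) \<le> \<epsilon>/5" using eta by blast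
      have n2: "norm (\<zeta> u - \<zeta> s) \<le> G u - G s"
        unfolding zdiff[OF su] Gdiff[OF su]
        by (rule integral_norm_bound_integral[OF isub[OF su(1) su(3)] isub2[OF su(1) su(3)]]) auto
      have "(norm (\<zeta> u - \<zeta> s))^2 \<le> (\<epsilon>/5) * (G u - G s)"
        unfolding power2_eq_square using n1 n2 by (rule mult_mono) (use ep in auto)
      moreover have "w s \<bullet> (\<zeta> u - \<zeta> s) \<le> 2 * (\<epsilon>/5) * (G u - G s)" by (rule aebound[OF su eta])
      ultimately have "h u \<le> \<epsilon> * G s + \<epsilon> * (G u - G s)" using hstep[of u s] hs by linarith
      thus ?thesis by (simp add: algebra_simps)
    qed
    show ?thesis
    proof (rule induct_bound[where \<delta>="\<delta>/2" and h=h and e=\<epsilon> and G=G and T=T and u=t])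
      show "\<delta>/2 > 0" using d by simp
      show "h 0 \<le> \<epsilon> * G 0" using h0 G0 by simp
      show "0 \<le> t" by (rule t0)
      show "t \<le> T" by (simp add: T_def)
    qed (rule step; assumption)
  qed
  have Gt: "0 \<le> G t" using Gnn[of 0 t] G0 t0 by (simp add: T_def)
  have "h t \<le> 0"
  proof (rule ccontr)
    assume "\<not> h t \<le> 0"
    hence hp: "h t > 0" by simp
    have "h t \<le> (h t / (G t + 1)) * G t" using main[of "h t / (G t + 1)"] hp Gt by simp
    also have "\<dots> < h t" using hp Gt by (simp add: divide_simps)
    finally show False by simp
  qed
  hence "w t = 0" by (simp add: h_def)
  hence "\<zeta> t = P (\<zeta> t)" by (simp add: w_def)
  thus ?thesis using PS by metis
qed



context
  fixes K :: "'a::euclidean_space set" and r R :: real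
    and f f' :: "real \<Rightarrow> real" and f0 :: ereal
  assumes Kc: "convex K" and Kcl: "closed K" and rp: "0 < r" and ib: "ball 0 r \<subseteq> K" and ob: "K \<subseteq> cball 0 R"
    and f0p: "f0 > 0"
    and fm: "mono_on {x. 0 \<le> x \<and> ereal x < f0} f"
    and fc: "convex_on {x. 0 \<le> x \<and> ereal x < f0} f"
    and fd: "\<forall>x. 0 \<le> x \<and> ereal x < f0 \<longrightarrow>
                   (f has_real_derivative f' x) (at x within {x. 0 \<le> x \<and> ereal x < f0})"
    and fcont: "continuous_on {x. 0 \<le> x \<and> ereal x < f0} f'"
    and f'0: "f' 0 = 0"
begin

abbreviation "M \<equiv> minkowski K"
abbreviation "\<phi> \<equiv> phi_of f f0 K"

lemmas Mn = M_nonneg[OF Kc rp ib ob]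
lemmas Mcv = M_convex[OF Kc rp ib ob]
lemmas Mup = M_upper[OF Kc rp ib ob]
lemmas Mlo = M_lower[OF Kc rp ib ob]
lemmas Madd = M_add[OF Kc rp ib ob]
lemmas Mscale = M_scale[OF Kc rp ib ob]
lemmas Mzero = M_zero[OF Kc rp ib ob]
lemmas Mcont = M_cont[OF Kc rp ib ob]
lemmas RP = Rpos[OF Kc rp ib ob]
lemmas qlow = quot_lower[OF f0p fm fc fd fcont f'0]
lemmas f'mono = f'_mono[OF f0p fm fc fd fcont f'0]
lemmas f'nn = f'_nonneg[OF f0p fm fc fd fcont f'0]

lemma phi_val: "ereal (M x) < f0 \<Longrightarrow> \<phi> x = ereal (f (M x))"
  using Mn[of x] by (simp add: phi_of_def)

lemma phi_fin: "\<bar>\<phi> x\<bar> \<noteq> \<infinity> \<Longrightarrow> ereal (M x) < f0"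
  by (auto simp: phi_of_def split: if_splits)

lemma subgrad_M:
  assumes xi: "\<xi> \<in> subdiff \<phi> x" and z: "ereal (M z) < f0"
  shows "\<xi> \<bullet> (z - x) \<le> f' (M x) * (M z - M x)"
proof -
  have xd: "ereal (M x) < f0" using xi phi_fin by (auto simp: subdiff_def)
  have sg: "\<phi> x + ereal (\<xi> \<bullet> (y - x)) \<le> \<phi> y" for y using xi by (auto simp: subdiff_def)
  have "\<xi> \<bullet> (z - x) \<le> (M z - M x) * f' (M x)"
  proof (rule qlow)
    show "0 \<le> M x" "ereal (M x) < f0" "0 \<le> M x + (M z - M x)" "ereal (M x + (M z - M x)) < f0"
      using xd z Mn[of x] Mn[of z] by auto
    fix s :: real assume s: "0 < s" "s < 1"
    let ?zs = "(1-s) *\<^sub>R x + s *\<^sub>R z"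
    have le1: "M ?zs \<le> (1-s) * M x + s * M z" using Mcv s by auto
    have d1: "ereal ((1-s) * M x + s * M z) < f0" using s xd z by (intro D_conv) auto
    have d2: "ereal (M ?zs) < f0" using D_down[OF Mn le1 d1] .
    have "f (M ?zs) \<le> f ((1-s) * M x + s * M z)"
      using s le1 d1 d2 Mn[of ?zs] Mn[of x] Mn[of z]
      by (intro mono_onD[OF fm]) auto
    moreover have "\<phi> x + ereal (\<xi> \<bullet> (?zs - x)) \<le> \<phi> ?zs" by (rule sg)
    hence "f (M x) + \<xi> \<bullet> (?zs - x) \<le> f (M ?zs)" using phi_val[OF xd] phi_val[OF d2] by simp
    moreover have "?zs - x = s *\<^sub>R (z - x)" by (simp add: algebra_simps)
    moreover have "(1-s) * M x + s * M z = M x + s * (M z - M x)" by (simp add: algebra_simps)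
    ultimately show "s * (\<xi> \<bullet> (z - x)) \<le> f (M x + s * (M z - M x)) - f (M x)" by simp
  qed
  thus ?thesis by (simp add: mult.commute)
qed

lemma subgrad_norm:
  assumes xi: "\<xi> \<in> subdiff \<phi> x"
  shows "norm \<xi> \<le> f' (M x) / r"
proof -
  have xd: "ereal (M x) < f0" using xi phi_fin by (auto simp: subdiff_def)
  have fnn: "0 \<le> f' (M x)" using f'nn Mn xd by auto
  show ?thesis
  proof (cases "\<xi> = 0")
    case True thus ?thesis using fnn rp by simp
  next
    case False
    obtain e where e: "e > 0" "ereal (M x + e) < f0" using D_right[OF xd] by blast
    define h where "h = e * r"
    have h: "h > 0" using e rp by (simp add: h_def)
    define u where "u = (1 / norm \<xi>) *\<^sub>R \<xi>"
    have nu: "norm u = 1" using False by (simp add: u_def)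
    let ?z = "x + h *\<^sub>R u"
    have "M ?z \<le> M x + M (h *\<^sub>R u)" by (rule Madd)
    also have "M (h *\<^sub>R u) \<le> norm (h *\<^sub>R u) / r" by (rule Mup)
    also have "norm (h *\<^sub>R u) / r = e" using h nu rp by (simp add: h_def)
    finally have zle: "M ?z \<le> M x + e" by simp
    have zd: "ereal (M ?z) < f0" using D_down[OF Mn zle e(2)] .
    have "\<xi> \<bullet> (?z - x) \<le> f' (M x) * (M ?z - M x)" by (rule subgrad_M[OF xi zd])
    also have "\<dots> \<le> f' (M x) * e" using zle fnn by (intro mult_left_mono) auto
    finally have "h * (\<xi> \<bullet> u) \<le> f' (M x) * e" by simp
    moreover have "\<xi> \<bullet> u = norm \<xi>" using False by (simp add: u_def dot_square_norm power2_eq_square)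
    ultimately have "e * r * norm \<xi> \<le> f' (M x) * e" by (simp add: h_def)
    thus ?thesis using e rp by (simp add: divide_simps mult.commute mult.left_commute)
  qed
qed

lemma subgrad_init:
  assumes xi: "\<xi> \<in> subdiff \<phi> x" and C: "norm \<xi> \<le> C"
  shows "f' (M x) \<le> R * C"
proof -
  have xd: "ereal (M x) < f0" using xi phi_fin by (auto simp: subdiff_def)
  have C0: "0 \<le> C" using C norm_ge_zero[of \<xi>] by linarith
  have "ereal (M 0) < f0" using Mzero f0p by (simp add: zero_ereal_def)
  from subgrad_M[OF xi this] have "\<xi> \<bullet> (0 - x) \<le> f' (M x) * (0 - M x)" using Mzero by simp
  hence "M x * f' (M x) \<le> \<xi> \<bullet> x" by (simp add: algebra_simps)
  also have "\<dots> \<le> norm \<xi> * norm x" by (rule norm_cauchy_schwarz)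
  also have "\<dots> \<le> C * (R * M x)" using C C0 Mlo[of x] by (intro mult_mono) auto
  finally have *: "M x * f' (M x) \<le> M x * (R * C)" by (simp add: algebra_simps)
  show ?thesis
  proof (cases "M x = 0")
    case True thus ?thesis using f'0 C0 RP by simp
  next
    case False thus ?thesis using * Mn[of x] by (simp add: mult_le_cancel_left)
  qed
qed


lemma subgrad_proj:
  assumes xi: "\<xi> \<in> subdiff \<phi> x" and mu: "0 \<le> \<mu>" "\<mu> < M x" and fr: "R * C \<le> f' (M x)" and C0: "0 \<le> C"
  shows "C * norm (x - closest_point {y. M y \<le> \<mu>} x) \<le> \<xi> \<bullet> (x - closest_point {y. M y \<le> \<mu>} x)"
proof -
  define S where "S = {y. M y \<le> \<mu>}"
  have Scl: "closed S" unfolding S_def by (rule closed_Collect_le[OF Mcont continuous_on_const])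
  have "0 \<in> S" using Mzero mu by (simp add: S_def)
  hence Sne: "S \<noteq> {}" by blast
  define y where "y = closest_point S x"
  have yS: "y \<in> S" unfolding y_def by (rule closest_point_in_set[OF Scl Sne])
  hence My: "M y \<le> \<mu>" by (simp add: S_def)
  have xd: "ereal (M x) < f0" using xi phi_fin by (auto simp: subdiff_def)
  have yd: "ereal (M y) < f0" using D_down[OF Mn[of y] _ xd] My mu by simp
  have fnn: "0 \<le> f' (M x)" using f'nn Mn xd by auto
  have m0: "M x > 0" using mu by simp
  have "\<xi> \<bullet> (y - x) \<le> f' (M x) * (M y - M x)" by (rule subgrad_M[OF xi yd])
  also have "\<dots> \<le> f' (M x) * (\<mu> - M x)" using My fnn by (intro mult_left_mono) auto
  finally have A: "f' (M x) * (M x - \<mu>) \<le> \<xi> \<bullet> (x - y)" by (simp add: inner_diff_right algebra_simps)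
  define z where "z = (\<mu> / M x) *\<^sub>R x"
  have "M z \<le> (\<mu> / M x) * M x" unfolding z_def using mu m0 by (intro Mscale) simp
  hence "z \<in> S" using m0 by (simp add: S_def)
  hence "dist x y \<le> dist x z" unfolding y_def by (rule closest_point_le[OF Scl])
  also have "dist x z = (1 - \<mu> / M x) * norm x"
  proof -
    have "x - z = (1 - \<mu> / M x) *\<^sub>R x" by (simp add: z_def algebra_simps)
    moreover have "0 \<le> 1 - \<mu> / M x" using mu m0 by (simp add: divide_simps)
    ultimately show ?thesis by (simp add: dist_norm)
  qed
  also have "\<dots> \<le> (1 - \<mu> / M x) * (R * M x)" using mu m0 Mlo[of x] by (intro mult_left_mono) (auto simp: divide_simps)
  also have "\<dots> = R * (M x - \<mu>)" using m0 by (simp add: divide_simps algebra_simps)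
  finally have B: "norm (x - y) \<le> R * (M x - \<mu>)" by (simp add: dist_norm)
  have "C * norm (x - y) \<le> C * (R * (M x - \<mu>))" using B C0 by (intro mult_left_mono) auto
  also have "\<dots> = (R * C) * (M x - \<mu>)" by simp
  also have "\<dots> \<le> f' (M x) * (M x - \<mu>)" using fr mu by (intro mult_right_mono) auto
  finally show ?thesis using A by (simp add: y_def S_def)
qed

lemma main_bound:
  fixes \<alpha> :: "real \<Rightarrow> real" and g :: "real \<Rightarrow> 'a"
  assumes C: "C > 0" and z0: "\<zeta>0 \<in> DC C \<phi>"
    and gb: "AE t in lebesgue. t > 0 \<longrightarrow> norm (g t) \<le> C"
    and al: "\<exists>\<alpha>0>0. AE t in lebesgue. t > 0 \<longrightarrow> \<alpha>0 \<le> \<alpha> t"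
    and sol: "is_solution \<phi> \<alpha> g \<zeta>0 \<zeta> \<zeta>'"
  shows "AE t in lebesgue. t > 0 \<longrightarrow> norm (g t - \<alpha> t *\<^sub>R \<zeta>' t) \<le> R / r * C"
proof -
  obtain \<alpha>0 where a0: "\<alpha>0 > 0" and ae_a: "AE t in lebesgue. t > 0 \<longrightarrow> \<alpha>0 \<le> \<alpha> t" using al by blast
  have int: "\<forall>T>0. \<zeta>' absolutely_integrable_on {0..T}"
    and sl: "\<forall>t\<ge>0. \<zeta> t = \<zeta>0 + integral {0..t} \<zeta>'"
    and ae_s: "AE t in lebesgue. t > 0 \<longrightarrow> g t - \<alpha> t *\<^sub>R \<zeta>' t \<in> subdiff \<phi> (\<zeta> t)"
    using sol by (auto simp: is_solution_def)
  obtain \<xi>0 where xi0: "\<xi>0 \<in> subdiff \<phi> \<zeta>0" "norm \<xi>0 \<le> C" using z0 by (auto simp: DC_def)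
  have init: "f' (M \<zeta>0) \<le> R * C" by (rule subgrad_init[OF xi0])
  have RC: "0 < R * C" using RP C by simp
  have goodpt: "\<forall>t\<ge>0. ereal (M (\<zeta> t)) < f0 \<longrightarrow> f' (M (\<zeta> t)) \<le> R * C"
  proof (cases "\<forall>m. 0 \<le> m \<and> ereal m < f0 \<longrightarrow> f' m \<le> R * C")
    case True thus ?thesis using Mn by blast
  next
    case False
    then obtain m1 where m1: "0 \<le> m1" "ereal m1 < f0" "f' m1 > R * C" by force
    define A where "A = {0..m1} \<inter> f' -` {..R*C}"
    have "continuous_on {0..m1} f'"
      by (rule continuous_on_subset[OF fcont]) (use m1 D_down in auto)
    hence Acl: "closed A" unfolding A_def by (rule continuous_closed_preimage) auto
    have A0: "0 \<in> A" using m1 f'0 RC by (simp add: A_def)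
    have Abd: "bdd_above A" by (rule bdd_aboveI[of _ m1]) (auto simp: A_def)
    define \<mu> where "\<mu> = Sup A"
    have muA: "\<mu> \<in> A" unfolding \<mu>_def using closed_contains_Sup[OF _ Abd Acl] A0 by blast
    hence mu: "0 \<le> \<mu>" "\<mu> \<le> m1" "f' \<mu> \<le> R * C" by (auto simp: A_def)
    have mud: "ereal \<mu> < f0" using D_down[OF mu(1) mu(2) m1(2)] .
    have bad: "f' m > R * C" if "0 \<le> m" "ereal m < f0" "m > \<mu>" for m
    proof (cases "m \<le> m1")
      case True
      show ?thesis
      proof (rule ccontr)
        assume "\<not> f' m > R * C"
        hence "m \<in> A" using True that by (auto simp: A_def)
        hence "m \<le> \<mu>" unfolding \<mu>_def by (rule cSup_upper[OF _ Abd])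
        thus False using that by simp
      qed
    next
      case False
      hence "f' m1 \<le> f' m" using m1 that by (intro f'mono) auto
      thus ?thesis using m1 by simp
    qed
    have good: "f' m \<le> R * C" if "0 \<le> m" "m \<le> \<mu>" for m
      using f'mono[OF that mud] mu by simp
    define S where "S = {y. M y \<le> \<mu>}"
    have Scl: "closed S" unfolding S_def by (rule closed_Collect_le[OF Mcont continuous_on_const])
    have Scv: "convex S" unfolding S_def convex_alt
    proof (intro ballI allI impI)
      fix x y and u :: real assume xy: "x \<in> {y. M y \<le> \<mu>}" "y \<in> {y. M y \<le> \<mu>}" and u: "0 \<le> u \<and> u \<le> 1"
      have "M ((1 - u) *\<^sub>R x + u *\<^sub>R y) \<le> (1-u) * M x + u * M y" using Mcv u by auto
      also have "\<dots> \<le> (1-u) * \<mu> + u * \<mu>" using xy u by (intro add_mono mult_left_mono) auto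
      finally show "(1 - u) *\<^sub>R x + u *\<^sub>R y \<in> {y. M y \<le> \<mu>}" by (simp add: algebra_simps)
    qed
    have "0 \<in> S" using Mzero mu by (simp add: S_def)
    hence Sne: "S \<noteq> {}" by blast
    have z0d: "ereal (M \<zeta>0) < f0" using xi0 phi_fin by (auto simp: subdiff_def)
    have z0S: "\<zeta>0 \<in> S"
    proof (rule ccontr)
      assume "\<zeta>0 \<notin> S"
      hence "M \<zeta>0 > \<mu>" by (simp add: S_def)
      hence "f' (M \<zeta>0) > R * C" using bad Mn z0d by blast
      thus False using init by simp
    qed
    have ae: "AE \<tau> in lebesgue. \<tau> > 0 \<longrightarrow> (\<zeta> \<tau> - closest_point S (\<zeta> \<tau>)) \<bullet> \<zeta>' \<tau> \<le> 0"
      using ae_s ae_a gb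
    proof eventually_elim
      case (elim \<tau>)
      show ?case
      proof
        assume tp: "\<tau> > 0"
        define \<xi> where "\<xi> = g \<tau> - \<alpha> \<tau> *\<^sub>R \<zeta>' \<tau>"
        have xi: "\<xi> \<in> subdiff \<phi> (\<zeta> \<tau>)" using elim tp by (simp add: \<xi>_def)
        have at: "\<alpha> \<tau> > 0" using elim tp a0 by auto
        have gt: "norm (g \<tau>) \<le> C" using elim tp by auto
        define n where "n = \<zeta> \<tau> - closest_point S (\<zeta> \<tau>)"
        show "n \<bullet> \<zeta>' \<tau> \<le> 0" unfolding n_def[symmetric]
        proof (cases "\<zeta> \<tau> \<in> S")
          case True
          hence "n = 0" by (simp add: n_def closest_point_self)
          thus ?thesis by simp
        next
          case False
          hence Mt: "M (\<zeta> \<tau>) > \<mu>" by (simp add: S_def)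
          have td: "ereal (M (\<zeta> \<tau>)) < f0" using xi phi_fin by (auto simp: subdiff_def)
          have "f' (M (\<zeta> \<tau>)) > R * C" using bad Mn td Mt by blast
          hence "C * norm n \<le> \<xi> \<bullet> n"
            using subgrad_proj[OF xi mu(1) Mt _ ] C by (simp add: n_def S_def)
          moreover have "n \<bullet> g \<tau> \<le> C * norm n"
            using norm_cauchy_schwarz[of n "g \<tau>"] gt mult_left_mono[OF gt norm_ge_zero[of n]]
            by (simp add: mult.commute)
          moreover have "\<alpha> \<tau> * (n \<bullet> \<zeta>' \<tau>) = n \<bullet> g \<tau> - \<xi> \<bullet> n"
            by (simp add: \<xi>_def inner_diff_right inner_commute)
          ultimately have "\<alpha> \<tau> * (n \<bullet> \<zeta>' \<tau>) \<le> 0" by linarith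
          thus ?thesis using at by (simp add: mult_le_0_iff)
        qed
      qed
    qed
    have inS: "\<zeta> t \<in> S" if "t \<ge> 0" for t
      by (rule dyn[OF Scl Scv Sne int sl z0S ae that])
    show ?thesis
    proof (intro allI impI)
      fix t :: real assume "t \<ge> 0" "ereal (M (\<zeta> t)) < f0"
      hence "M (\<zeta> t) \<le> \<mu>" using inS by (simp add: S_def)
      thus "f' (M (\<zeta> t)) \<le> R * C" using good Mn by blast
    qed
  qed
  show ?thesis using ae_s
  proof eventually_elim
    case (elim t)
    show ?case
    proof
      assume tp: "t > 0"
      hence xi: "g t - \<alpha> t *\<^sub>R \<zeta>' t \<in> subdiff \<phi> (\<zeta> t)" using elim by simp
      have td: "ereal (M (\<zeta> t)) < f0" using xi phi_fin by (auto simp: subdiff_def)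
      have "norm (g t - \<alpha> t *\<^sub>R \<zeta>' t) \<le> f' (M (\<zeta> t)) / r" by (rule subgrad_norm[OF xi])
      also have "\<dots> \<le> R * C / r" using goodpt tp td rp by (intro divide_right_mono) auto
      finally show "norm (g t - \<alpha> t *\<^sub>R \<zeta>' t) \<le> R / r * C" by simp
    qed
  qed
qed

end

theorem proposition3p3:
  fixes f :: "real \<Rightarrow> real" and f0 :: ereal and K :: "'a::euclidean_space set"
    and r R :: real
  assumes f0_pos: "f0 > 0"
    and f_nonneg: "\<forall>x. 0 \<le> x \<and> ereal x < f0 \<longrightarrow> 0 \<le> f x"
    and f_mono: "mono_on {x. 0 \<le> x \<and> ereal x < f0} f"
    and f_convex: "convex_on {x. 0 \<le> x \<and> ereal x < f0} f"
    and f_C1: "\<exists>f'. (\<forall>x. 0 \<le> x \<and> ereal x < f0 \<longrightarrow>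
                   (f has_real_derivative f' x) (at x within {x. 0 \<le> x \<and> ereal x < f0}))
                 \<and> continuous_on {x. 0 \<le> x \<and> ereal x < f0} f' \<and> f' 0 = 0"
    and f_zero: "f 0 = 0"
    and K_closed: "closed K" and K_convex: "convex K"
    and r_pos: "0 < r" and r_le_R: "r \<le> R"
    and inner_ball: "ball 0 r \<subseteq> K" and outer_ball: "K \<subseteq> cball 0 R"
  shows "property_X (phi_of f f0 K) (R / r)"
  proof -
  obtain f' where fd: "\<forall>x. 0 \<le> x \<and> ereal x < f0 \<longrightarrow>
                   (f has_real_derivative f' x) (at x within {x. 0 \<le> x \<and> ereal x < f0})"
     and fcont: "continuous_on {x. 0 \<le> x \<and> ereal x < f0} f'" and f'0: "f' 0 = 0"
    using f_C1 by blast
  show ?thesis unfolding property_X_def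
  proof (intro allI impI ballI)
    fix C :: real and \<zeta>0 :: 'a and \<alpha> :: "real \<Rightarrow> real" and g :: "real \<Rightarrow> 'a" and \<zeta> \<zeta>'
    assume C: "C > 0" and z0: "\<zeta>0 \<in> DC C (phi_of f f0 K)"
      and al: "\<exists>\<alpha>0>0. AE t in lebesgue. t > 0 \<longrightarrow> \<alpha>0 \<le> \<alpha> t"
      and gb: "AE t in lebesgue. t > 0 \<longrightarrow> norm (g t) \<le> C"
      and sol: "is_solution (phi_of f f0 K) \<alpha> g \<zeta>0 \<zeta> \<zeta>'"
    show "AE t in lebesgue. t > 0 \<longrightarrow> norm (g t - \<alpha> t *\<^sub>R \<zeta>' t) \<le> R / r * C"
      by (rule main_bound[OF K_convex K_closed r_pos inner_ball outer_ball f0_pos f_mono f_convex fd fcont f'0 C z0 gb al sol])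
  qed
qed

end
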